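(* There is no graph $H$ on five vertices such that every $H$-free graph $G$ is $(\chi(G)+1)$-mixing.
   Context: All graphs are finite and simple. $\chi(G)$ is the chromatic number. The reconfiguration graph $\mathcal{R}_k(G)$ has the proper $k$-colourings of $G$ (colours $\{1,\dots,k\}$) as vertices, two being adjacent if they differ on exactly one vertex; $G$ is $k$-mixing if $\mathcal{R}_k(G)$ is connected. $G$ is $H$-free if it has no induced subgraph isomorphic to $H$. *)

theory Defs
  imports Main
begin

definition simple_graph :: "'a set \<Rightarrow> ('a \<Rightarrow> 'a \<Rightarrow> bool) \<Rightarrow> bool" where
  "simple_graph V E \<longleftrightarrow> finite V \<and> (\<forall>u v. E u v \<longrightarrow> u \<in> V \<and> v \<in> V)
     \<and> (\<forall>u v. E u v \<longrightarrow> E v u) \<and> (\<forall>v. \<not> E v v)"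

definition induced_sub :: "'b set \<Rightarrow> ('b \<Rightarrow> 'b \<Rightarrow> bool) \<Rightarrow> 'a set \<Rightarrow> ('a \<Rightarrow> 'a \<Rightarrow> bool) \<Rightarrow> bool" where
  "induced_sub VH EH VG EG \<longleftrightarrow> (\<exists>f. inj_on f VH \<and> f ` VH \<subseteq> VG \<and>
      (\<forall>u\<in>VH. \<forall>v\<in>VH. EH u v \<longleftrightarrow> EG (f u) (f v)))"

definition H_free :: "'b set \<Rightarrow> ('b \<Rightarrow> 'b \<Rightarrow> bool) \<Rightarrow> 'a set \<Rightarrow> ('a \<Rightarrow> 'a \<Rightarrow> bool) \<Rightarrow> bool" where
  "H_free VH EH VG EG \<longleftrightarrow> \<not> induced_sub VH EH VG EG"

text \<open>Proper k-colourings with colours {1..k}; as functions they are normalised to 0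
outside V, so that they correspond bijectively to maps V -> {1..k}.\<close>
definition proper_colouring :: "'a set \<Rightarrow> ('a \<Rightarrow> 'a \<Rightarrow> bool) \<Rightarrow> nat \<Rightarrow> ('a \<Rightarrow> nat) \<Rightarrow> bool" where
  "proper_colouring V E k c \<longleftrightarrow> (\<forall>v\<in>V. c v \<in> {1..k}) \<and> (\<forall>v. v \<notin> V \<longrightarrow> c v = 0)
     \<and> (\<forall>u v. E u v \<longrightarrow> c u \<noteq> c v)"

definition chromatic_number :: "'a set \<Rightarrow> ('a \<Rightarrow> 'a \<Rightarrow> bool) \<Rightarrow> nat" where
  "chromatic_number V E = (LEAST k. \<exists>c. proper_colouring V E k c)"

definition recolour_adj :: "'a set \<Rightarrow> ('a \<Rightarrow> 'a \<Rightarrow> bool) \<Rightarrow> nat \<Rightarrow> ('a \<Rightarrow> nat) \<Rightarrow> ('a \<Rightarrow> nat) \<Rightarrow> bool" where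
  "recolour_adj V E k c c' \<longleftrightarrow> proper_colouring V E k c \<and> proper_colouring V E k c'
     \<and> card {v \<in> V. c v \<noteq> c' v} = 1"

definition k_mixing :: "'a set \<Rightarrow> ('a \<Rightarrow> 'a \<Rightarrow> bool) \<Rightarrow> nat \<Rightarrow> bool" where
  "k_mixing V E k \<longleftrightarrow> (\<forall>c c'. proper_colouring V E k c \<and> proper_colouring V E k c'
     \<longrightarrow> (recolour_adj V E k)\<^sup>*\<^sup>* c c')"

end

theory Submission imports Defs begin
lemma u10_cases: "(u::nat) < 10 \<Longrightarrow> u = 0 \<or> u = 1 \<or> u = 2 \<or> u = 3 \<or> u = 4 \<or> u = 5 \<or> u = 6 \<or> u = 7 \<or> u = 8 \<or> u = 9"
  by presburger

lemma u6_cases: "(u::nat) < 6 \<Longrightarrow> u = 0 \<or> u = 1 \<or> u = 2 \<or> u = 3 \<or> u = 4 \<or> u = 5"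
  by presburger

lemma x5_cases: "(x::nat) \<in> {1..5} \<Longrightarrow> x = 1 \<or> x = 2 \<or> x = 3 \<or> x = 4 \<or> x = 5"
  by auto

lemma x3_cases: "(x::nat) \<in> {1..3} \<Longrightarrow> x = 1 \<or> x = 2 \<or> x = 3"
  by auto

lemma not_mixing:
  assumes p0: "proper_colouring V E k c0" and p1: "proper_colouring V E k c1" and ne: "c0 \<noteq> c1"
    and fr: "\<And>v x. v \<in> V \<Longrightarrow> x \<in> {1..k} \<Longrightarrow> x \<noteq> c0 v \<Longrightarrow> \<exists>u. E v u \<and> c0 u = x"
  shows "\<not> k_mixing V E k"
proof
  have noadj: "\<not> recolour_adj V E k c0 c'" for c'
  proof
    assume r: "recolour_adj V E k c0 c'"
    then have pc: "proper_colouring V E k c'" and cd: "card {v\<in>V. c0 v \<noteq> c' v} = 1"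
      unfolding recolour_adj_def by auto
    from cd obtain w where W: "{v\<in>V. c0 v \<noteq> c' v} = {w}" using card_1_singletonE by blast
    then have wV: "w \<in> V" and wne: "c0 w \<noteq> c' w" by auto
    have cw: "c' w \<in> {1..k}" using pc wV unfolding proper_colouring_def by auto
    obtain u where Ewu: "E w u" and cu: "c0 u = c' w" using fr[OF wV cw] wne by metis
    have uV: "u \<in> V"
    proof (rule ccontr)
      assume "u \<notin> V"
      then have "c0 u = 0" using p0 unfolding proper_colouring_def by auto
      then show False using cu cw by auto
    qed
    have "u \<noteq> w" using cu wne by auto
    then have "c0 u = c' u" using W uV by auto
    moreover have "c' w \<noteq> c' u" using pc Ewu unfolding proper_colouring_def by auto
    ultimately show False using cu by simp
  qed
  assume "k_mixing V E k"
  then have "(recolour_adj V E k)\<^sup>*\<^sup>* c0 c1" using p0 p1 unfolding k_mixing_def by auto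
  then show False
  proof (cases rule: converse_rtranclpE)
    case base then show False using ne by simp
  next
    case (step y) then show False using noadj by blast
  qed
qed

lemma chrom_eq:
  assumes "proper_colouring V E k c" and "\<And>j c. j < k \<Longrightarrow> \<not> proper_colouring V E j c"
  shows "chromatic_number V E = k"
  unfolding chromatic_number_def
proof (rule Least_equality)
  show "\<exists>c. proper_colouring V E k c" using assms(1) by blast
next
  fix y assume "\<exists>c. proper_colouring V E y c"
  then show "k \<le> y" using assms(2) not_less by blast
qed

lemma proper_mono:
  assumes "proper_colouring V E k c" "k \<le> k'"
  shows "proper_colouring V E k' c"
  using assms unfolding proper_colouring_def by auto

definition E6 :: "nat \<Rightarrow> nat \<Rightarrow> bool" where
  "E6 u v \<longleftrightarrow> (u, v) \<in> set [(0,1),(1,2),(2,3),(3,4),(4,5),(5,0),(1,0),(2,1),(3,2),(4,3),(5,4),(0,5)]"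

definition c6a :: "nat \<Rightarrow> nat" where "c6a v = (if v < 6 then v mod 3 + 1 else 0)"
definition c6b :: "nat \<Rightarrow> nat" where "c6b v = (if v < 6 then v mod 2 + 1 else 0)"

lemma E6_cases: "E6 u v \<Longrightarrow> (u = 0 \<and> v = 1) \<or> (u = 1 \<and> v = 2) \<or> (u = 2 \<and> v = 3) \<or> (u = 3 \<and> v = 4)
   \<or> (u = 4 \<and> v = 5) \<or> (u = 5 \<and> v = 0) \<or> (u = 1 \<and> v = 0) \<or> (u = 2 \<and> v = 1) \<or> (u = 3 \<and> v = 2) \<or> (u = 4 \<and> v = 3)
   \<or> (u = 5 \<and> v = 4) \<or> (u = 0 \<and> v = 5)"
  unfolding E6_def by simp

lemma sg6: "simple_graph {0..<6} E6"
  unfolding simple_graph_def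
proof (intro conjI allI impI notI)
  show "finite {0..<6::nat}" by simp
next
  fix u v assume "E6 u v" then show "u \<in> {0..<6}" using E6_cases[of u v] by auto
next
  fix u v assume "E6 u v" then show "v \<in> {0..<6}" using E6_cases[of u v] by auto
next
  fix u v assume "E6 u v" then show "E6 v u" using E6_cases[of u v] by (auto simp: E6_def)
next
  fix v assume "E6 v v" then show False using E6_cases[of v v] by auto
qed

lemma pc6a: "proper_colouring {0..<6} E6 3 c6a"
  unfolding proper_colouring_def
proof (intro conjI allI impI ballI)
  fix u v assume "E6 u v"
  then show "c6a u \<noteq> c6a v" using E6_cases[of u v] by (auto simp: c6a_def)
qed (auto simp: c6a_def)

lemma pc6b: "proper_colouring {0..<6} E6 2 c6b"
  unfolding proper_colouring_def
proof (intro conjI allI impI ballI)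
  fix u v assume "E6 u v"
  then show "c6b u \<noteq> c6b v" using E6_cases[of u v] by (auto simp: c6b_def)
qed (auto simp: c6b_def)

lemma chi6: "chromatic_number {0..<6} E6 = 2"
proof (rule chrom_eq[OF pc6b])
  fix j c assume j: "j < (2::nat)"
  show "\<not> proper_colouring {0..<6} E6 j c"
  proof
    assume p: "proper_colouring {0..<6} E6 j c"
    have "E6 0 1" by (simp add: E6_def)
    then have "c 0 \<noteq> c 1" "c 0 \<in> {1..j}" "c 1 \<in> {1..j}" using p unfolding proper_colouring_def by auto
    then show False using j by auto
  qed
qed

lemma frozen6: "v \<in> {0..<6} \<Longrightarrow> x \<in> {1..3} \<Longrightarrow> x \<noteq> c6a v \<Longrightarrow> \<exists>u. E6 v u \<and> c6a u = x"
proof -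
  assume v: "v \<in> {0..<6}" and x: "x \<in> {1..3}" and ne: "x \<noteq> c6a v"
  have v6: "v < 6" using v by simp
  have "\<exists>u\<in>{0,1,2,3,4,5}. E6 v u \<and> c6a u = x"
    using u6_cases[OF v6] x3_cases[OF x] ne by (elim disjE) (simp_all add: E6_def c6a_def)
  then show ?thesis by blast
qed

lemma nonmix6: "\<not> k_mixing {0..<6} E6 (chromatic_number {0..<6} E6 + 1)"
proof -
  have ne: "c6a \<noteq> c6b"
  proof
    assume "c6a = c6b"
    then have "c6a 2 = c6b 2" by simp
    then show False by (simp add: c6a_def c6b_def)
  qed
  show ?thesis unfolding chi6
    using not_mixing[OF pc6a proper_mono[OF pc6b] ne frozen6] by simp
qed

section \<open>A P5-free graph on 10 vertices\<close>

definition nbrs10 :: "nat list list" where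
 "nbrs10 = [[2, 4, 6, 7, 8, 9], [2, 4, 5, 7, 8, 9], [0, 1, 3, 4, 8, 9], [2, 4, 5, 6, 7, 9], [0, 1, 2, 3, 5, 6], [1, 3, 4, 6, 7, 8], [0, 3, 4, 5, 7, 8], [0, 1, 3, 5, 6, 9], [0, 1, 2, 5, 6, 9], [0, 1, 2, 3, 7, 8]]"

definition nb10 :: "nat \<Rightarrow> nat list" where
 "nb10 u = (if u < 10 then nbrs10 ! u else [])"

definition E10 :: "nat \<Rightarrow> nat \<Rightarrow> bool" where
 "E10 u v \<longleftrightarrow> v \<in> set (nb10 u)"

definition c10a :: "nat \<Rightarrow> nat" where "c10a v = (if v < 10 then v mod 5 + 1 else 0)"
definition c10b :: "nat \<Rightarrow> nat" where "c10b v = (if v < 10 then [1,1,2,1,3,2,4,3,3,4] ! v else 0)"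

lemma nb10_simps: "nb10 0 = [2, 4, 6, 7, 8, 9]" "nb10 1 = [2, 4, 5, 7, 8, 9]" "nb10 2 = [0, 1, 3, 4, 8, 9]"
 "nb10 3 = [2, 4, 5, 6, 7, 9]" "nb10 4 = [0, 1, 2, 3, 5, 6]" "nb10 5 = [1, 3, 4, 6, 7, 8]"
 "nb10 6 = [0, 3, 4, 5, 7, 8]" "nb10 7 = [0, 1, 3, 5, 6, 9]" "nb10 8 = [0, 1, 2, 5, 6, 9]" "nb10 9 = [0, 1, 2, 3, 7, 8]"
 "nb10 (Suc 0) = [2, 4, 5, 7, 8, 9]"
  by (simp_all add: nb10_def nbrs10_def)

lemma c10a_simps: "c10a 0 = 1" "c10a 1 = 2" "c10a 2 = 3" "c10a 3 = 4" "c10a 4 = 5"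
  "c10a 5 = 1" "c10a 6 = 2" "c10a 7 = 3" "c10a 8 = 4" "c10a 9 = 5" "c10a (Suc 0) = 2"
  by (simp_all add: c10a_def)

lemma c10b_simps: "c10b 0 = 1" "c10b 1 = 1" "c10b 2 = 2" "c10b 3 = 1" "c10b 4 = 3"
  "c10b 5 = 2" "c10b 6 = 4" "c10b 7 = 3" "c10b 8 = 3" "c10b 9 = 4" "c10b (Suc 0) = 1"
  by (simp_all add: c10b_def)

lemma nb10_props: assumes "(u::nat) < 10" shows "(\<forall>v\<in>set (nb10 u). v < 10 \<and> u \<in> set (nb10 v) \<and> v \<noteq> u
    \<and> c10a u \<noteq> c10a v \<and> c10b u \<noteq> c10b v)"
  using u10_cases[OF assms] by (elim disjE) (simp_all add: nb10_simps c10a_simps c10b_simps)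

lemma nb10_out: "\<not> (u::nat) < 10 \<Longrightarrow> nb10 u = []"
  by (simp add: nb10_def)

lemma E10_props: assumes "E10 u v" shows "u < 10" "v < 10" "E10 v u" "u \<noteq> v" "c10a u \<noteq> c10a v" "c10b u \<noteq> c10b v"
proof -
  have u: "u < 10" using assms nb10_out unfolding E10_def by fastforce
  then show "u < 10" .
  show "v < 10" "E10 v u" "u \<noteq> v" "c10a u \<noteq> c10a v" "c10b u \<noteq> c10b v"
    using nb10_props[OF u] assms unfolding E10_def by auto
qed

lemma sg10: "simple_graph {0..<10} E10"
  unfolding simple_graph_def
proof (intro conjI allI impI notI)
  show "finite {0..<10::nat}" by simp
next
  fix u v assume "E10 u v" then show "u \<in> {0..<10}" using E10_props(1) by simp
next
  fix u v assume "E10 u v" then show "v \<in> {0..<10}" using E10_props(2) by simp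
next
  fix u v assume "E10 u v" then show "E10 v u" by (rule E10_props(3))
next
  fix v assume "E10 v v" then show False using E10_props(4) by blast
qed

lemma pc10a: "proper_colouring {0..<10} E10 5 c10a"
  unfolding proper_colouring_def by (auto simp: c10a_def dest: E10_props(5))

lemma c10b_range: assumes "v < 10" shows "c10b v \<in> {1..4}"
  using u10_cases[OF assms] by (elim disjE) (simp_all add: c10b_simps)

lemma pc10b: "proper_colouring {0..<10} E10 4 c10b"
  unfolding proper_colouring_def using c10b_range by (auto simp: c10b_def dest: E10_props(6))

lemma chi10: "chromatic_number {0..<10} E10 = 4"
proof (rule chrom_eq[OF pc10b])
  fix j c assume j: "j < (4::nat)"
  show "\<not> proper_colouring {0..<10} E10 j c"
  proof
    assume p: "proper_colouring {0..<10} E10 j c"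
    have "E10 0 2" "E10 0 8" "E10 0 9" "E10 2 8" "E10 2 9" "E10 8 9" by (simp_all add: E10_def nb10_simps)
    then have "c 0 \<noteq> c 2" "c 0 \<noteq> c 8" "c 0 \<noteq> c 9" "c 2 \<noteq> c 8" "c 2 \<noteq> c 9" "c 8 \<noteq> c 9"
      "c 0 \<in> {1..j}" "c 2 \<in> {1..j}" "c 8 \<in> {1..j}" "c 9 \<in> {1..j}"
      using p unfolding proper_colouring_def by auto
    then show False using j by auto
  qed
qed

lemma frozen10: "v \<in> {0..<10} \<Longrightarrow> x \<in> {1..5} \<Longrightarrow> x \<noteq> c10a v \<Longrightarrow> \<exists>u. E10 v u \<and> c10a u = x"
proof -
  assume v: "v \<in> {0..<10}" and x: "x \<in> {1..5}" and ne: "x \<noteq> c10a v"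
  have v10: "v < 10" using v by simp
  have "\<exists>u\<in>set (nb10 v). c10a u = x"
    using u10_cases[OF v10] x5_cases[OF x] ne by (elim disjE) (simp_all add: nb10_simps c10a_simps)
  then show ?thesis unfolding E10_def by blast
qed

lemma nonmix10: "\<not> k_mixing {0..<10} E10 (chromatic_number {0..<10} E10 + 1)"
proof -
  have ne: "c10a \<noteq> c10b"
  proof
    assume "c10a = c10b"
    then have "c10a 1 = c10b 1" by simp
    then show False by (simp add: c10a_simps c10b_simps)
  qed
  show ?thesis unfolding chi10
    using not_mixing[OF pc10a proper_mono[OF pc10b] ne frozen10] by simp
qed

lemma noP5_check:
  "\<forall>a\<in>{0,1,2,3,4,5,6,7,8,9}. \<forall>b\<in>set (nb10 a). \<forall>c\<in>set (nb10 b). c \<noteq> a \<and> c \<notin> set (nb10 a) \<longrightarrow>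
    (\<forall>d\<in>set (nb10 c). d \<noteq> b \<and> d \<noteq> a \<and> d \<notin> set (nb10 a) \<and> d \<notin> set (nb10 b) \<longrightarrow>
    (\<forall>e\<in>set (nb10 d). e \<noteq> c \<and> e \<noteq> b \<and> e \<noteq> a \<longrightarrow> e \<in> set (nb10 a) \<or> e \<in> set (nb10 b) \<or> e \<in> set (nb10 c)))"
  by (simp add: nb10_simps)

lemma noP5:
  assumes "a < 10" "E10 a b" "E10 b c" "E10 c d" "E10 d e" "a \<noteq> c" "a \<noteq> d" "b \<noteq> d" "a \<noteq> e" "b \<noteq> e" "c \<noteq> e"
   "\<not> E10 a c" "\<not> E10 a d" "\<not> E10 a e" "\<not> E10 b d" "\<not> E10 b e" "\<not> E10 c e"
  shows False
proof -
  have A: "a \<in> {0,1,2,3,4,5,6,7,8,9}" using u10_cases[OF assms(1)] by auto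
  have "e \<in> set (nb10 a) \<or> e \<in> set (nb10 b) \<or> e \<in> set (nb10 c)"
    by (rule noP5_check[rule_format, of a b c d e]) (use A assms in \<open>auto simp: E10_def\<close>)
  then show False using assms unfolding E10_def by blast
qed

lemma combine:
  fixes VH :: "nat set"
  assumes card: "card VH = 5"
    and f: "inj_on f VH" "f ` VH \<subseteq> {0..<6}" "\<forall>u\<in>VH. \<forall>v\<in>VH. EH u v \<longleftrightarrow> E6 (f u) (f v)"
    and g: "inj_on g VH" "g ` VH \<subseteq> {0..<10}" "\<forall>u\<in>VH. \<forall>v\<in>VH. EH u v \<longleftrightarrow> E10 (g u) (g v)"
  shows False
proof -
  define S where "S = f ` VH"
  have fin: "finite VH" using card by (metis card.infinite zero_neq_numeral)
  have cS: "card S = 5" unfolding S_def using card_image[OF f(1)] card by simp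
  have Ssub: "S \<subseteq> {0..<6}" using f(2) S_def by simp
  obtain i where i: "i < 6" "i \<notin> S"
  proof -
    have "S \<noteq> {0..<6}" using cS by auto
    then have "\<not> {0..<6} \<subseteq> S" using Ssub by blast
    then obtain i where "i \<in> {0..<6}" "i \<notin> S" by blast
    then show ?thesis using that by simp
  qed
  have Seq: "S = {0..<6} - {i}"
  proof (rule card_subset_eq)
    show "finite ({0..<6::nat} - {i})" by simp
    show "S \<subseteq> {0..<6} - {i}" using Ssub i by auto
    show "card S = card ({0..<6::nat} - {i})" using cS i by simp
  qed
  define h where "h = g \<circ> inv_into VH f"
  have key: "E6 x y \<longleftrightarrow> E10 (h x) (h y)" if xy: "x \<in> S" "y \<in> S" for x y
  proof -
    obtain a b where ab: "a \<in> VH" "b \<in> VH" "x = f a" "y = f b" using xy S_def by auto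
    then show ?thesis using f(1,3) g(3) unfolding h_def by auto
  qed
  have hV: "h x < 10" if "x \<in> S" for x
    using that g(2) f(1) unfolding h_def S_def by auto
  have hinj: "h x \<noteq> h y" if xy: "x \<in> S" "y \<in> S" "x \<noteq> y" for x y
  proof
    assume "h x = h y"
    obtain a b where ab: "a \<in> VH" "b \<in> VH" "x = f a" "y = f b" using xy S_def by auto
    then have "g a = g b" using \<open>h x = h y\<close> f(1) unfolding h_def by auto
    then have "a = b" using g(1) ab inj_on_def by metis
    then show False using ab xy by simp
  qed
  have path: False if js: "j1 \<in> S" "j2 \<in> S" "j3 \<in> S" "j4 \<in> S" "j5 \<in> S"
    and d: "j1 \<noteq> j3" "j1 \<noteq> j4" "j2 \<noteq> j4" "j1 \<noteq> j5" "j2 \<noteq> j5" "j3 \<noteq> j5"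
    and e: "E6 j1 j2" "E6 j2 j3" "E6 j3 j4" "E6 j4 j5"
    and n: "\<not> E6 j1 j3" "\<not> E6 j1 j4" "\<not> E6 j1 j5" "\<not> E6 j2 j4" "\<not> E6 j2 j5" "\<not> E6 j3 j5"
    for j1 j2 j3 j4 j5
  proof (rule noP5)
    show "h j1 < 10" using hV js by simp
    show "E10 (h j1) (h j2)" "E10 (h j2) (h j3)" "E10 (h j3) (h j4)" "E10 (h j4) (h j5)"
      using key js e by auto
    show "\<not> E10 (h j1) (h j3)" "\<not> E10 (h j1) (h j4)" "\<not> E10 (h j1) (h j5)"
      "\<not> E10 (h j2) (h j4)" "\<not> E10 (h j2) (h j5)" "\<not> E10 (h j3) (h j5)"
      using key js n by auto
    show "h j1 \<noteq> h j3" "h j1 \<noteq> h j4" "h j2 \<noteq> h j4" "h j1 \<noteq> h j5" "h j2 \<noteq> h j5" "h j3 \<noteq> h j5"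
      using hinj js d by auto
  qed
  from u6_cases[OF i(1)] show False
  proof (elim disjE)
    assume "i = 0" then show False using path[of 1 2 3 4 5] Seq by (simp add: E6_def)
  next
    assume "i = 1" then show False using path[of 2 3 4 5 0] Seq by (simp add: E6_def)
  next
    assume "i = 2" then show False using path[of 3 4 5 0 1] Seq by (simp add: E6_def)
  next
    assume "i = 3" then show False using path[of 4 5 0 1 2] Seq by (simp add: E6_def)
  next
    assume "i = 4" then show False using path[of 5 0 1 2 3] Seq by (simp add: E6_def)
  next
    assume "i = 5" then show False using path[of 0 1 2 3 4] Seq by (simp add: E6_def)
  qed
qed

theorem lemma5:
  shows "\<not> (\<exists>(VH :: nat set) EH. simple_graph VH EH \<and> card VH = 5 \<and>
           (\<forall>(VG :: nat set) EG. simple_graph VG EG \<and> H_free VH EH VG EG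
              \<longrightarrow> k_mixing VG EG (chromatic_number VG EG + 1)))"
proof
  assume "\<exists>(VH :: nat set) EH. simple_graph VH EH \<and> card VH = 5 \<and>
           (\<forall>(VG :: nat set) EG. simple_graph VG EG \<and> H_free VH EH VG EG
              \<longrightarrow> k_mixing VG EG (chromatic_number VG EG + 1))"
  then obtain VH :: "nat set" and EH where c: "card VH = 5"
    and all: "\<forall>(VG :: nat set) EG. simple_graph VG EG \<and> H_free VH EH VG EG
              \<longrightarrow> k_mixing VG EG (chromatic_number VG EG + 1)" by blast
  have "\<not> H_free VH EH {0..<6} E6" using all sg6 nonmix6 by blast
  then obtain f where f: "inj_on f VH" "f ` VH \<subseteq> {0..<6}" "\<forall>u\<in>VH. \<forall>v\<in>VH. EH u v \<longleftrightarrow> E6 (f u) (f v)"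
    unfolding H_free_def induced_sub_def by blast
  have "\<not> H_free VH EH {0..<10} E10" using all sg10 nonmix10 by blast
  then obtain g where g: "inj_on g VH" "g ` VH \<subseteq> {0..<10}" "\<forall>u\<in>VH. \<forall>v\<in>VH. EH u v \<longleftrightarrow> E10 (g u) (g v)"
    unfolding H_free_def induced_sub_def by blast
  show False using combine[OF c f g] .
qed

end
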